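(* Consider problem (P2) without the short-term power constraint, i.e., maximize $\mathbb{E}[R_\nu(P_\nu,\rho_\nu)]$ over policy pairs with $P_\nu\ge0$, $0\le\rho_\nu\le1$, subject to $\mathbb{E}[Q^{\rm NL}_\nu(P_\nu,\rho_\nu)]\ge Q$ and $\mathbb{E}[P_\nu]\le P_{\rm avg}$ (with $Q$ feasible). Given $\lambda,\mu>0$, let $Z(x)=\frac{1-\Omega}{P_sTax}$, $x_1=\frac{4\mu(1-\Omega)}{\lambda P_sTa}$, $x_2=\frac{\mu}{\lambda\Omega P_sTa}$ (so $x_2>x_1$), and for $h_\nu\ge x_1$ let $P^A_{{\rm o},\nu}=\frac1{h_\nu}\Big(-\frac1a\ln\Big(\frac{2}{1+\sqrt{1-4\mu Z(h_\nu)/\lambda}}-1\Big)+b\Big)$. Define $P'_{{\rm ID},\nu}=\max\{1/\mu-\sigma^2/h_\nu,0\}$ and $P'_{{\rm EH},\nu}=0$ if $h_\nu\le x_1$; $P'_{{\rm EH},\nu}=P^A_{{\rm o},\nu}$ if $x_1<h_\nu<x_2$ and $\lambda Q^{\rm NL}_\nu(P^A_{{\rm o},\nu},1)>\mu P^A_{{\rm o},\nu}$, and $0$ if $x_1<h_\nu<x_2$ otherwise; $P'_{{\rm EH},\nu}=P^A_{{\rm o},\nu}$ if $h_\nu\ge x_2$. Set $P_\nu=P'_{{\rm ID},\nu}+P'_{{\rm EH},\nu}$ and $\rho_\nu=0$ if $P_\nu=0$, $\rho_\nu=P'_{{\rm EH},\nu}/P_\nu$ otherwise. If $\lambda=\lambda^{\rm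 NL}>0$, $\mu=\mu^{\rm NL}>0$ are such that $\mathbb{E}[Q^{\rm NL}_\nu(P_\nu,\rho_\nu)]=Q$ and $\mathbb{E}[P_\nu]=P_{\rm avg}$, then $(P_\nu,\rho_\nu)$ is an optimal solution of this problem.
   Context: Standing model: constants $a,b,P_s,T,\sigma^2>0$ are fixed and $\Omega=1/(1+e^{ab})$. Fading is modeled on a probability space carrying independent random variables $h$ (channel power gain, values in $(0,\infty)$, $\mathbb{E}[h]<\infty$) and $U$ (uniform on $[0,1]$). A fading state is $\nu=(h_\nu,U_\nu)$, distributed as $(h,U)$; $\mathbb{E}$ is expectation over the fading state. A policy is a Borel measurable function of the fading state. For a fading state with gain $h_\nu$, transmit power $p\ge0$ and power-splitting ratio $\rho\in[0,1]$: $R_\nu(p,\rho)=\ln\big(1+(1-\rho)h_\nu p/\sigma^2\big)$ (rate, in nats); $\Psi_\nu(p,\rho)=1/(1+e^{-a(\rho h_\nu p-b)})$; $Q^{\rm NL}_\nu(p,\rho)=P_sT(\Psi_\nu(p,\rho)-\Omega)/(1-\Omega)$ (harvested energy). $P_{\rm avg}>0$ is the average power limit and $Q\ge0$ the average energy threshold. *)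

theory Defs
  imports "HOL-Probability.Probability"
begin

definition Omega :: "real \<Rightarrow> real \<Rightarrow> real" where
  "Omega a b = 1 / (1 + exp (a * b))"

definition rate :: "real \<Rightarrow> real \<Rightarrow> real \<Rightarrow> real \<Rightarrow> real" where
  "rate sigma2 h p \<rho> = ln (1 + (1 - \<rho>) * h * p / sigma2)"

definition Psi :: "real \<Rightarrow> real \<Rightarrow> real \<Rightarrow> real \<Rightarrow> real \<Rightarrow> real" where
  "Psi a b h p \<rho> = 1 / (1 + exp (- a * (\<rho> * h * p - b)))"

definition QNL :: "real \<Rightarrow> real \<Rightarrow> real \<Rightarrow> real \<Rightarrow> real \<Rightarrow> real \<Rightarrow> real \<Rightarrow> real" where
  "QNL a b Ps T h p \<rho> = Ps * T * (Psi a b h p \<rho> - Omega a b) / (1 - Omega a b)"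

(* Expectation over the fading state nu = (h, U) *)
definition Exp :: "'s measure \<Rightarrow> ('s \<Rightarrow> real) \<Rightarrow> ('s \<Rightarrow> real) \<Rightarrow> (real \<times> real \<Rightarrow> real) \<Rightarrow> real" where
  "Exp M h U f = (\<integral>\<omega>. f (h \<omega>, U \<omega>) \<partial>M)"

definition feasible_P2 ::
  "'s measure \<Rightarrow> ('s \<Rightarrow> real) \<Rightarrow> ('s \<Rightarrow> real) \<Rightarrow> real \<Rightarrow> real \<Rightarrow> real \<Rightarrow> real \<Rightarrow> real \<Rightarrow> real
   \<Rightarrow> (real \<times> real \<Rightarrow> real) \<Rightarrow> (real \<times> real \<Rightarrow> real) \<Rightarrow> bool" where
  "feasible_P2 M h U a b Ps T Pavg Q P \<rho> \<longleftrightarrow>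
     P \<in> borel_measurable borel \<and> \<rho> \<in> borel_measurable borel \<and>
     (\<forall>\<omega>\<in>space M. 0 \<le> P (h \<omega>, U \<omega>) \<and> 0 \<le> \<rho> (h \<omega>, U \<omega>) \<and> \<rho> (h \<omega>, U \<omega>) \<le> 1) \<and>
     integrable M (\<lambda>\<omega>. P (h \<omega>, U \<omega>)) \<and>
     Exp M h U P \<le> Pavg \<and>
     Exp M h U (\<lambda>\<nu>. QNL a b Ps T (fst \<nu>) (P \<nu>) (\<rho> \<nu>)) \<ge> Q"

definition Zf :: "real \<Rightarrow> real \<Rightarrow> real \<Rightarrow> real \<Rightarrow> real \<Rightarrow> real" where
  "Zf a b Ps T x = (1 - Omega a b) / (Ps * T * a * x)"

definition x1 :: "real \<Rightarrow> real \<Rightarrow> real \<Rightarrow> real \<Rightarrow> real \<Rightarrow> real \<Rightarrow> real" where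
  "x1 a b Ps T lam mu = 4 * mu * (1 - Omega a b) / (lam * Ps * T * a)"

definition x2 :: "real \<Rightarrow> real \<Rightarrow> real \<Rightarrow> real \<Rightarrow> real \<Rightarrow> real \<Rightarrow> real" where
  "x2 a b Ps T lam mu = mu / (lam * Omega a b * Ps * T * a)"

definition PA :: "real \<Rightarrow> real \<Rightarrow> real \<Rightarrow> real \<Rightarrow> real \<Rightarrow> real \<Rightarrow> real \<Rightarrow> real" where
  "PA a b Ps T lam mu h =
     (1 / h) * (- (1 / a) * ln (2 / (1 + sqrt (1 - 4 * mu * Zf a b Ps T h / lam)) - 1) + b)"

definition PID :: "real \<Rightarrow> real \<Rightarrow> real \<Rightarrow> real" where
  "PID sigma2 mu h = max (1 / mu - sigma2 / h) 0"

definition PEH :: "real \<Rightarrow> real \<Rightarrow> real \<Rightarrow> real \<Rightarrow> real \<Rightarrow> real \<Rightarrow> real \<Rightarrow> real" where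
  "PEH a b Ps T lam mu h =
     (if h \<le> x1 a b Ps T lam mu then 0
      else if h < x2 a b Ps T lam mu then
        (if lam * QNL a b Ps T h (PA a b Ps T lam mu h) 1 > mu * PA a b Ps T lam mu h
         then PA a b Ps T lam mu h else 0)
      else PA a b Ps T lam mu h)"

definition Pstar :: "real \<Rightarrow> real \<Rightarrow> real \<Rightarrow> real \<Rightarrow> real \<Rightarrow> real \<Rightarrow> real \<Rightarrow> real \<Rightarrow> real" where
  "Pstar a b Ps T sigma2 lam mu h = PID sigma2 mu h + PEH a b Ps T lam mu h"

definition rhostar :: "real \<Rightarrow> real \<Rightarrow> real \<Rightarrow> real \<Rightarrow> real \<Rightarrow> real \<Rightarrow> real \<Rightarrow> real \<Rightarrow> real" where
  "rhostar a b Ps T sigma2 lam mu h =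
     (if Pstar a b Ps T sigma2 lam mu h = 0 then 0
      else PEH a b Ps T lam mu h / Pstar a b Ps T sigma2 lam mu h)"

end

theory Submission
  imports Defs
begin



definition psi :: "real \<Rightarrow> real \<Rightarrow> real \<Rightarrow> real" where
  "psi a b t = 1 / (1 + exp (- a * (t - b)))"

lemma onepexp_ne: "1 + exp (x::real) \<noteq> 0"
  by (smt (verit) exp_gt_zero)

lemma psi_deriv:
  "((psi a b) has_real_derivative (a * psi a b t * (1 - psi a b t))) (at t)"
proof -
  define E where "E = exp (- a * (t - b))"
  have E: "E > 0" by (simp add: E_def)
  have "((\<lambda>t. 1 / (1 + exp (- a * (t - b)))) has_real_derivative
        (- (- a * E) / (1 + E)^2)) (at t)"
    unfolding E_def
    by (auto intro!: derivative_eq_intros simp: power2_eq_square add_pos_pos onepexp_ne)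
  moreover have "- (- a * E) / (1 + E)^2 = a * psi a b t * (1 - psi a b t)"
    unfolding psi_def E_def[symmetric] using E
    by (simp add: field_simps power2_eq_square)
  ultimately show ?thesis unfolding psi_def[abs_def] by simp
qed

lemma psi_mono: "a > 0 \<Longrightarrow> t1 \<le> t2 \<Longrightarrow> psi a b t1 \<le> psi a b t2"
  unfolding psi_def
  by (auto intro!: divide_left_mono add_pos_pos mult_pos_pos simp: mult_left_mono)

lemma psi_bounds: "0 < psi a b t" "psi a b t < 1"
  unfolding psi_def by (auto simp: add_pos_pos)

lemma phi_dec:
  assumes "u \<le> v" "\<And>t. u \<le> t \<Longrightarrow> t \<le> v \<Longrightarrow> a * psi a b t * (1 - psi a b t) \<le> m"
  shows "psi a b v - m * v \<le> psi a b u - m * u"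
proof -
  have "(\<lambda>t. psi a b t - m * t) v \<le> (\<lambda>t. psi a b t - m * t) u"
    by (rule deriv_nonpos_imp_antimono[where g' = "\<lambda>t. a * psi a b t * (1 - psi a b t) - m"])
       (auto intro!: derivative_eq_intros psi_deriv assms)
  then show ?thesis by simp
qed

lemma phi_inc:
  assumes "u \<le> v" "\<And>t. u \<le> t \<Longrightarrow> t \<le> v \<Longrightarrow> a * psi a b t * (1 - psi a b t) \<ge> m"
  shows "psi a b u - m * u \<le> psi a b v - m * v"
proof -
  have "(\<lambda>t. psi a b t - m * t) u \<le> (\<lambda>t. psi a b t - m * t) v"
    by (rule deriv_nonneg_imp_mono[where g' = "\<lambda>t. a * psi a b t * (1 - psi a b t) - m"])
       (auto intro!: derivative_eq_intros psi_deriv assms)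
  then show ?thesis by simp
qed


lemma key_id: "(a::real) * p * (1 - p) - a * (1 - s^2) / 4 = - a * (p - (1 - s)/2) * (p - (1 + s)/2)"
  by (simp add: field_simps power2_eq_square)

lemma core1:
  assumes a: "a > 0" and s: "0 \<le> s" and tA: "psi a b tA = (1 + s)/2"
    and t: "psi a b t \<ge> (1 - s)/2" and m: "m = a * (1 - s^2) / 4"
  shows "psi a b t - m * t \<le> psi a b tA - m * tA"
proof (cases "tA \<le> t")
  case True
  show ?thesis
  proof (rule phi_dec[OF True])
    fix x assume "tA \<le> x" "x \<le> t"
    then have "psi a b x \<ge> (1+s)/2" using psi_mono[OF a, of tA x b] tA by simp
    then have "(psi a b x - (1 - s)/2) * (psi a b x - (1 + s)/2) \<ge> 0" using s by simp
    then have "- a * (psi a b x - (1 - s)/2) * (psi a b x - (1 + s)/2) \<le> 0"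
      using a by (simp add: mult_nonneg_nonneg mult.assoc)
    then show "a * psi a b x * (1 - psi a b x) \<le> m" using key_id[of a "psi a b x" s] m by simp
  qed
next
  case False
  then have le: "t \<le> tA" by simp
  show ?thesis
  proof (rule phi_inc[OF le])
    fix x assume "t \<le> x" "x \<le> tA"
    then have "psi a b x \<le> (1+s)/2" "psi a b x \<ge> (1-s)/2"
      using psi_mono[OF a, of x tA b] psi_mono[OF a, of t x b] tA t by simp_all
    then have "(psi a b x - (1 - s)/2) * (psi a b x - (1 + s)/2) \<le> 0"
      by (simp add: mult_nonneg_nonpos)
    then have "- a * (psi a b x - (1 - s)/2) * (psi a b x - (1 + s)/2) \<ge> 0"
      using a by (simp add: mult_nonneg_nonpos mult.assoc)
    then show "a * psi a b x * (1 - psi a b x) \<ge> m" using key_id[of a "psi a b x" s] m by simp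
  qed
qed

lemma core2:
  assumes a: "a > 0" and s: "0 \<le> s" and t: "psi a b t \<le> (1 - s)/2"
    and u: "u \<le> t" and m: "m = a * (1 - s^2) / 4"
  shows "psi a b t - m * t \<le> psi a b u - m * u"
proof (rule phi_dec[OF u])
  fix x assume "u \<le> x" "x \<le> t"
  then have "psi a b x \<le> (1-s)/2" using psi_mono[OF a, of x t b] t by simp
  then have "(psi a b x - (1 - s)/2) * (psi a b x - (1 + s)/2) \<ge> 0" using s
    by (simp add: mult_nonpos_nonpos)
  then have "- a * (psi a b x - (1 - s)/2) * (psi a b x - (1 + s)/2) \<le> 0"
    using a by (simp add: mult_nonneg_nonneg mult.assoc)
  then show "a * psi a b x * (1 - psi a b x) \<le> m" using key_id[of a "psi a b x" s] m by simp
qed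

lemma core0:
  assumes a: "a > 0" and u: "u \<le> t" and m: "m \<ge> a / 4"
  shows "psi a b t - m * t \<le> psi a b u - m * u"
proof (rule phi_dec[OF u])
  fix x
  have "psi a b x * (1 - psi a b x) \<le> 1/4"
    using sum_power2_ge_zero[of "psi a b x - 1/2" 0] by (simp add: power2_eq_square algebra_simps)
  then have "a * (psi a b x * (1 - psi a b x)) \<le> a * (1/4)" using a by (intro mult_left_mono) auto
  then show "a * psi a b x * (1 - psi a b x) \<le> m" using m by (simp only: mult.assoc)
qed


lemma Omega_bounds: "a > 0 \<Longrightarrow> b > 0 \<Longrightarrow> 0 < Omega a b \<and> Omega a b < 1/2"
proof -
  assume "a > 0" "b > 0"
  then have e: "1 + exp (a*b) > 2" by simp
  have ep: "1 + exp (a*b) > 0" by (smt (verit) exp_gt_zero)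
  have "2 / (1 + exp (a*b)) < 1" using e ep by (simp only: divide_less_eq) simp
  moreover have "0 < 1 / (1 + exp (a*b))" using ep by simp
  ultimately show ?thesis unfolding Omega_def by simp
qed

lemma psi0: "psi a b 0 = Omega a b"
  unfolding psi_def Omega_def by simp

lemma QNL_psi: "QNL a b Ps T h y \<rho> = Ps * T * (psi a b (\<rho> * h * y) - Omega a b) / (1 - Omega a b)"
  unfolding QNL_def Psi_def psi_def by simp

lemma f_form:
  assumes "a > 0" "b > 0" "h > 0" "lam > 0" "Ps > 0" "T > 0"
  shows "lam * QNL a b Ps T h y 1 - mu * y =
    (lam * Ps * T / (1 - Omega a b)) * ((psi a b (h*y) - (mu * (1 - Omega a b) / (h * lam * Ps * T)) * (h*y)) - Omega a b)"
proof -
  have "1 - Omega a b > 0" using Omega_bounds[OF assms(1,2)] by simp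
  then show ?thesis using assms unfolding QNL_psi by (simp add: field_simps)
qed

lemma PA_psi:
  assumes a: "a > 0" and h: "h > 0" and s0: "0 \<le> s" and s1: "s < 1"
    and sdef: "sqrt (1 - 4 * mu * Zf a b Ps T h / lam) = s"
  shows "psi a b (h * PA a b Ps T lam mu h) = (1 + s)/2"
    and "h * PA a b Ps T lam mu h \<ge> b"
proof -
  have hp: "h * PA a b Ps T lam mu h = - (1 / a) * ln (2 / (1 + s) - 1) + b"
    unfolding PA_def sdef using h by simp
  have q: "2 / (1 + s) - 1 = (1 - s)/(1 + s)" using s0 by (simp add: field_simps)
  have qp: "(1 - s)/(1 + s) > 0" using s0 s1 by simp
  have ql: "(1 - s)/(1 + s) \<le> 1" using s0 by simp
  have "- a * (h * PA a b Ps T lam mu h - b) = ln ((1 - s)/(1 + s))"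
    unfolding hp q using a by simp
  then have ee: "exp (- a * (h * PA a b Ps T lam mu h - b)) = (1 - s)/(1 + s)"
    using qp by simp
  show "psi a b (h * PA a b Ps T lam mu h) = (1 + s)/2"
    unfolding psi_def ee using s0 by (simp add: field_simps)
  have "ln ((1 - s)/(1 + s)) \<le> 0" using qp ql by simp
  then have "- (1 / a) * ln ((1 - s)/(1 + s)) \<ge> 0" using a
    by (simp add: divide_nonpos_pos)
  then show "h * PA a b Ps T lam mu h \<ge> b" unfolding hp q by simp
qed

lemma F_main:
  assumes a: "a > 0" and b: "b > 0" and h: "h > 0" and lam: "lam > 0" and Ps: "Ps > 0" and T: "T > 0"
    and mu: "mu > 0" and y: "y \<ge> 0"
  shows "lam * QNL a b Ps T h y 1 - mu * y \<le>
         lam * QNL a b Ps T h (PEH a b Ps T lam mu h) 1 - mu * PEH a b Ps T lam mu h"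
    and "PEH a b Ps T lam mu h \<ge> 0"
proof -
  define Om where "Om = Omega a b"
  have Om: "0 < Om" "Om < 1/2" using Omega_bounds[OF a b] Om_def by auto
  define K where "K = lam * Ps * T / (1 - Om)"
  define m where "m = mu * (1 - Om) / (h * lam * Ps * T)"
  have K: "K > 0" unfolding K_def using Om lam Ps T by simp
  define f where "f y = lam * QNL a b Ps T h y 1 - mu * y" for y
  have ff: "f y = K * ((psi a b (h*y) - m * (h*y)) - Om)" for y
    unfolding f_def K_def m_def Om_def using f_form[OF a b h lam Ps T] by simp
  have fle: "f y1 \<le> f y2" if "psi a b (h*y1) - m * (h*y1) \<le> psi a b (h*y2) - m * (h*y2)" for y1 y2
    unfolding ff using K that by (simp add: mult_left_mono)
  have fle': "psi a b (h*y1) - m * (h*y1) \<le> psi a b (h*y2) - m * (h*y2)" if "f y1 \<le> f y2" for y1 y2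
    using that unfolding ff using K by simp
  define c where "c = 4 * mu * Zf a b Ps T h / lam"
  have cm: "c = 4 * m / a" unfolding c_def m_def Zf_def Om_def using a h lam Ps T
    by (simp add: field_simps)
  have hy: "0 \<le> h * y" using h y by simp
  have x1c: "h \<le> x1 a b Ps T lam mu \<longleftrightarrow> c \<ge> 1"
    unfolding cm m_def x1_def Om_def[symmetric] using a h lam Ps T Om
    by (simp add: field_simps)
  have x2c: "h \<ge> x2 a b Ps T lam mu \<longleftrightarrow> m \<le> a * Om * (1 - Om)"
  proof -
    have p: "h * lam * Ps * T > 0" "lam * Om * Ps * T * a > 0" "1 - Om > 0" using a h lam Ps T Om by auto
    have "m \<le> a * Om * (1 - Om) \<longleftrightarrow> mu * (1 - Om) \<le> (a * Om * h * lam * Ps * T) * (1 - Om)"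
      unfolding m_def using p(1) by (simp add: pos_divide_le_eq mult_ac)
    also have "\<dots> \<longleftrightarrow> mu \<le> a * Om * h * lam * Ps * T" using p(3) by (simp add: mult_ac)
    also have "\<dots> \<longleftrightarrow> mu / (lam * Om * Ps * T * a) \<le> h" using p(2) by (simp add: field_simps)
    finally show ?thesis unfolding x2_def Om_def by simp
  qed
  have "f y \<le> f (PEH a b Ps T lam mu h) \<and> PEH a b Ps T lam mu h \<ge> 0"
  proof (cases "h \<le> x1 a b Ps T lam mu")
    case True
    then have "m \<ge> a / 4" using x1c cm a by (simp add: field_simps)
    then have "f y \<le> f 0" using core0[OF a hy, of m b] by (intro fle) simp
    then show ?thesis using True unfolding PEH_def by simp
  next
    case False
    then have c1: "c < 1" using x1c by simp
    have c0: "c > 0" unfolding c_def Zf_def using mu lam a Ps T h Om Om_def by simp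
    define s where "s = sqrt (1 - c)"
    have s0: "0 \<le> s" and s1: "s < 1" using c0 c1 unfolding s_def by auto
    have s2: "s^2 = 1 - c" unfolding s_def using c1 by simp
    have ms: "m = a * (1 - s^2) / 4" using s2 cm a by simp
    have sd: "sqrt (1 - 4 * mu * Zf a b Ps T h / lam) = s" unfolding s_def c_def ..
    define PA' where "PA' = PA a b Ps T lam mu h"
    have tA: "psi a b (h * PA') = (1 + s)/2" and tAb: "h * PA' \<ge> b"
      using PA_psi[OF a h s0 s1 sd] unfolding PA'_def by auto
    have PA0: "PA' \<ge> 0" using tAb b h by (smt (verit) mult_pos_neg)
    have q0: "QNL a b Ps T h 0 1 = 0" by (simp add: QNL_psi psi0)
    have maxf: "f y \<le> f 0 \<or> f y \<le> f PA'"
    proof (cases "psi a b (h*y) \<ge> (1 - s)/2")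
      case True
      show ?thesis using core1[OF a s0 tA True ms] fle by blast
    next
      case False
      show ?thesis using core2[OF a s0 _ hy ms, of b] False fle by fastforce
    qed
    show ?thesis
    proof (cases "h < x2 a b Ps T lam mu")
      case True
      have "f PA' = lam * QNL a b Ps T h PA' 1 - mu * PA'" by (simp add: f_def)
      then show ?thesis using True False maxf PA0 q0 unfolding PEH_def PA'_def[symmetric]
        by (auto simp: f_def)
    next
      case notx2: False
      have "m \<le> a * Om * (1 - Om)" using x2c notx2 by simp
      then have "a * psi a b 0 * (1 - psi a b 0) - a * (1 - s^2)/4 \<ge> 0"
        using psi0 Om_def ms by simp
      then have "- a * (Om - (1 - s)/2) * (Om - (1 + s)/2) \<ge> 0"
        using key_id[of a Om s] psi0[of a b] Om_def by simp
      then have "(Om - (1 - s)/2) * (Om - (1 + s)/2) \<le> 0" using a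
        by (smt (verit) mult_pos_pos mult.assoc mult_minus_left)
      moreover have "Om - (1 + s)/2 < 0" using Om s0 by simp
      ultimately have "Om \<ge> (1 - s)/2" by (smt (verit) mult_neg_neg)
      then have "psi a b (h * 0) \<ge> (1 - s)/2" using psi0 Om_def by simp
      from core1[OF a s0 tA this ms] have "f 0 \<le> f PA'" using fle by blast
      then show ?thesis using notx2 False maxf PA0 unfolding PEH_def PA'_def[symmetric] by auto
    qed
  qed
  then show "lam * QNL a b Ps T h y 1 - mu * y \<le>
         lam * QNL a b Ps T h (PEH a b Ps T lam mu h) 1 - mu * PEH a b Ps T lam mu h"
    and "PEH a b Ps T lam mu h \<ge> 0" unfolding f_def by auto
qed


lemma G_main:
  assumes s: "sigma2 > 0" and h: "h > 0" and mu: "mu > 0" and x: "x \<ge> 0"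
  shows "ln (1 + h * x / sigma2) - mu * x \<le> ln (1 + h * PID sigma2 mu h / sigma2) - mu * PID sigma2 mu h"
proof -
  define xs where "xs = PID sigma2 mu h"
  have xs0: "xs \<ge> 0" unfolding xs_def PID_def by simp
  have D: "sigma2 + h * xs > 0" using s h xs0 by (simp add: add_pos_nonneg)
  have N: "sigma2 + h * x > 0" using s h x by (simp add: add_pos_nonneg)
  have e1: "1 + h * x / sigma2 = (sigma2 + h * x) / sigma2" using s by (simp add: field_simps)
  have e2: "1 + h * xs / sigma2 = (sigma2 + h * xs) / sigma2" using s by (simp add: field_simps)
  have "ln (1 + h * x / sigma2) - ln (1 + h * xs / sigma2) = ln ((sigma2 + h * x) / (sigma2 + h * xs))"
    unfolding e1 e2 using s D N by (simp add: ln_div)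
  also have "\<dots> \<le> (sigma2 + h * x) / (sigma2 + h * xs) - 1"
    by (rule ln_le_minus_one) (use D N in simp)
  also have "\<dots> = h * (x - xs) / (sigma2 + h * xs)" using D by (simp add: field_simps)
  also have "\<dots> \<le> mu * (x - xs)"
  proof (cases "1 / mu - sigma2 / h > 0")
    case True
    then have "xs = 1/mu - sigma2/h" unfolding xs_def PID_def by simp
    then have "sigma2 + h * xs = h / mu" using h mu by (simp add: field_simps)
    then show ?thesis using h mu by simp
  next
    case False
    then have xs: "xs = 0" unfolding xs_def PID_def by simp
    from False have "h / sigma2 \<le> mu" using s h mu by (simp add: field_simps)
    then have "h / sigma2 * x \<le> mu * x" using x by (rule mult_right_mono)
    then show ?thesis unfolding xs by (simp add: mult.commute)
  qed
  finally show ?thesis unfolding xs_def by (simp add: right_diff_distrib)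
qed

lemma cand_split:
  "(1 - rhostar a b Ps T sigma2 lam mu h) * Pstar a b Ps T sigma2 lam mu h = PID sigma2 mu h"
  "rhostar a b Ps T sigma2 lam mu h * Pstar a b Ps T sigma2 lam mu h = PEH a b Ps T lam mu h"
  if "PEH a b Ps T lam mu h \<ge> 0"
proof -
  have p0: "PID sigma2 mu h \<ge> 0" unfolding PID_def by simp
  show "rhostar a b Ps T sigma2 lam mu h * Pstar a b Ps T sigma2 lam mu h = PEH a b Ps T lam mu h"
    unfolding rhostar_def using that p0 by (auto simp: Pstar_def)
  then show "(1 - rhostar a b Ps T sigma2 lam mu h) * Pstar a b Ps T sigma2 lam mu h = PID sigma2 mu h"
    by (simp add: algebra_simps Pstar_def)
qed

lemma L_main:
  assumes a: "a > 0" and b: "b > 0" and h: "h > 0" and lam: "lam > 0" and Ps: "Ps > 0" and T: "T > 0"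
    and mu: "mu > 0" and s: "sigma2 > 0" and p: "p \<ge> 0" and r0: "0 \<le> \<rho>" and r1: "\<rho> \<le> 1"
  shows "rate sigma2 h p \<rho> - mu * p + lam * QNL a b Ps T h p \<rho> \<le>
     rate sigma2 h (Pstar a b Ps T sigma2 lam mu h) (rhostar a b Ps T sigma2 lam mu h)
     - mu * Pstar a b Ps T sigma2 lam mu h
     + lam * QNL a b Ps T h (Pstar a b Ps T sigma2 lam mu h) (rhostar a b Ps T sigma2 lam mu h)"
proof -
  have rr: "rate sigma2 h p r = ln (1 + h * ((1 - r) * p) / sigma2)" for p r
    unfolding rate_def by (simp add: mult_ac)
  have qq: "QNL a b Ps T h p r = QNL a b Ps T h (r * p) 1" for p r
    unfolding QNL_psi by (simp add: mult_ac)
  have pe: "PEH a b Ps T lam mu h \<ge> 0" using F_main[OF a b h lam Ps T mu order.refl] by simp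
  note cs = cand_split[OF pe]
  have xg: "(1 - \<rho>) * p \<ge> 0" "\<rho> * p \<ge> 0" using p r0 r1 by auto
  have g: "ln (1 + h * ((1 - \<rho>) * p) / sigma2) - mu * ((1 - \<rho>) * p)
     \<le> ln (1 + h * PID sigma2 mu h / sigma2) - mu * PID sigma2 mu h"
    by (rule G_main[OF s h mu xg(1)])
  have f: "lam * QNL a b Ps T h (\<rho> * p) 1 - mu * (\<rho> * p) \<le>
         lam * QNL a b Ps T h (PEH a b Ps T lam mu h) 1 - mu * PEH a b Ps T lam mu h"
    by (rule F_main(1)[OF a b h lam Ps T mu xg(2)])
  have "p = (1 - \<rho>) * p + \<rho> * p" by (simp add: algebra_simps)
  then have "rate sigma2 h p \<rho> - mu * p + lam * QNL a b Ps T h p \<rho> =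
     (ln (1 + h * ((1 - \<rho>) * p) / sigma2) - mu * ((1 - \<rho>) * p)) +
     (lam * QNL a b Ps T h (\<rho> * p) 1 - mu * (\<rho> * p))"
    unfolding rr qq[of p] by (simp add: algebra_simps)
  also have "\<dots> \<le> (ln (1 + h * PID sigma2 mu h / sigma2) - mu * PID sigma2 mu h) +
       (lam * QNL a b Ps T h (PEH a b Ps T lam mu h) 1 - mu * PEH a b Ps T lam mu h)"
    using f g by linarith
  also have "\<dots> = rate sigma2 h (Pstar a b Ps T sigma2 lam mu h) (rhostar a b Ps T sigma2 lam mu h)
     - mu * Pstar a b Ps T sigma2 lam mu h
     + lam * QNL a b Ps T h (Pstar a b Ps T sigma2 lam mu h) (rhostar a b Ps T sigma2 lam mu h)"
    unfolding rr qq[of "Pstar a b Ps T sigma2 lam mu h"] cs by (simp add: Pstar_def algebra_simps)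
  finally show ?thesis .
qed


lemma meas_PEH: "(\<lambda>h. PEH a b Ps T lam mu h) \<in> borel_measurable borel"
  unfolding PEH_def QNL_def Psi_def PA_def Zf_def by measurable

lemma meas_Pstar: "(\<lambda>h. Pstar a b Ps T sigma2 lam mu h) \<in> borel_measurable borel"
  unfolding Pstar_def PID_def using meas_PEH by measurable

lemma meas_rhostar: "(\<lambda>h. rhostar a b Ps T sigma2 lam mu h) \<in> borel_measurable borel"
  unfolding rhostar_def using meas_PEH meas_Pstar by measurable

lemma meas_fst: "(\<lambda>\<nu>::real\<times>real. Pstar a b Ps T sigma2 lam mu (fst \<nu>)) \<in> borel_measurable borel"
  unfolding borel_prod[symmetric] using meas_Pstar by measurable

lemma meas_fst2: "(\<lambda>\<nu>::real\<times>real. rhostar a b Ps T sigma2 lam mu (fst \<nu>)) \<in> borel_measurable borel"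
  unfolding borel_prod[symmetric] using meas_rhostar by measurable


lemma QNL_bound:
  assumes "a > 0" "b > 0" "Ps > 0" "T > 0"
  shows "\<bar>QNL a b Ps T h p r\<bar> \<le> Ps * T / (1 - Omega a b)"
proof -
  have Om: "0 < Omega a b" "Omega a b < 1/2" using Omega_bounds[OF assms(1,2)] by auto
  have "\<bar>psi a b (r * h * p) - Omega a b\<bar> \<le> 1" using psi_bounds[of a b "r*h*p"] Om by auto
  then have "Ps * T * \<bar>psi a b (r * h * p) - Omega a b\<bar> \<le> Ps * T * 1"
    using assms by (intro mult_left_mono) auto
  then show ?thesis unfolding QNL_psi using Om assms
    by (simp add: abs_mult divide_right_mono)
qed

lemma rate_bound:
  fixes sigma2 h x :: real
  assumes s: "sigma2 > 0" and h: "h > 0" and x: "x \<ge> 0"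
  shows "0 \<le> ln (1 + h * x / sigma2)" "ln (1 + h * x / sigma2) \<le> h / sigma2 + x"
proof -
  have hx: "h * x / sigma2 \<ge> 0" using s h x by (intro divide_nonneg_pos mult_nonneg_nonneg) auto
  then show "0 \<le> ln (1 + h * x / sigma2)" by simp
  have u: "1 + h * x / sigma2 \<le> (1 + h / sigma2) * (1 + x)"
    using s h x by (simp add: field_simps)
  have p1: "1 + h / sigma2 > 0" "1 + x > 0" using s h x by (auto simp: add_pos_pos)
  have "ln (1 + h * x / sigma2) \<le> ln ((1 + h / sigma2) * (1 + x))"
    using u hx by (subst ln_le_cancel_iff) auto
  also have "\<dots> = ln (1 + h / sigma2) + ln (1 + x)" using p1 by (simp add: ln_mult)
  also have "\<dots> \<le> h / sigma2 + x"
    using ln_le_minus_one[OF p1(1)] ln_le_minus_one[OF p1(2)] by simp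
  finally show "ln (1 + h * x / sigma2) \<le> h / sigma2 + x" .
qed

theorem lemma5:
  fixes M :: "'s measure" and h U :: "'s \<Rightarrow> real"
    and a b Ps T sigma2 Pavg Q lam mu :: real
  assumes "prob_space M"
    and "h \<in> borel_measurable M" and "U \<in> borel_measurable M"
    and "prob_space.indep_var M borel h borel U"
    and "\<forall>\<omega>\<in>space M. 0 < h \<omega>"
    and "integrable M h"
    and "distr M lborel U = uniform_measure lborel {0..1}"
    and "a > 0" "b > 0" "Ps > 0" "T > 0" "sigma2 > 0"
    and "Pavg > 0" "Q \<ge> 0"
    and "\<exists>P \<rho>. feasible_P2 M h U a b Ps T Pavg Q P \<rho>"
    and "lam > 0" "mu > 0"
    and "Exp M h U (\<lambda>\<nu>. QNL a b Ps T (fst \<nu>) (Pstar a b Ps T sigma2 lam mu (fst \<nu>))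
                                            (rhostar a b Ps T sigma2 lam mu (fst \<nu>))) = Q"
    and "Exp M h U (\<lambda>\<nu>. Pstar a b Ps T sigma2 lam mu (fst \<nu>)) = Pavg"
  shows "feasible_P2 M h U a b Ps T Pavg Q
           (\<lambda>\<nu>. Pstar a b Ps T sigma2 lam mu (fst \<nu>)) (\<lambda>\<nu>. rhostar a b Ps T sigma2 lam mu (fst \<nu>))
       \<and> (\<forall>P \<rho>. feasible_P2 M h U a b Ps T Pavg Q P \<rho> \<longrightarrow>
            Exp M h U (\<lambda>\<nu>. rate sigma2 (fst \<nu>) (P \<nu>) (\<rho> \<nu>))
            \<le> Exp M h U (\<lambda>\<nu>. rate sigma2 (fst \<nu>) (Pstar a b Ps T sigma2 lam mu (fst \<nu>))
                                              (rhostar a b Ps T sigma2 lam mu (fst \<nu>))))"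

proof -
  note asm = assms
  have pM: "prob_space M" by fact
  interpret prob_space M by fact
  have hpos: "\<And>\<omega>. \<omega> \<in> space M \<Longrightarrow> 0 < h \<omega>" using assms(5) by auto
  have a: "a > 0" and b: "b > 0" and Ps: "Ps > 0" and T: "T > 0" and s: "sigma2 > 0"
    and lam: "lam > 0" and mu: "mu > 0" using assms by auto
  define PS where "PS = Pstar a b Ps T sigma2 lam mu"
  define RS where "RS = rhostar a b Ps T sigma2 lam mu"
  have hm: "h \<in> borel_measurable M" "U \<in> borel_measurable M" using assms by auto
  have hU: "(\<lambda>\<omega>. (h \<omega>, U \<omega>)) \<in> M \<rightarrow>\<^sub>M (borel :: (real \<times> real) measure)"
    unfolding borel_prod[symmetric] using hm by measurable
  have mPS: "PS \<in> borel_measurable borel" unfolding PS_def using meas_Pstar by simp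
  have mRS: "RS \<in> borel_measurable borel" unfolding RS_def using meas_rhostar by simp
  have mPSh: "(\<lambda>\<omega>. PS (h \<omega>)) \<in> borel_measurable M" using mPS hm by measurable
  have mRSh: "(\<lambda>\<omega>. RS (h \<omega>)) \<in> borel_measurable M" using mRS hm by measurable
  have pe: "\<And>x. x > 0 \<Longrightarrow> PEH a b Ps T lam mu x \<ge> 0"
    using F_main(2)[OF a b _ lam Ps T mu order.refl] by blast
  have PS0: "\<And>x. x > 0 \<Longrightarrow> PS x \<ge> 0" unfolding PS_def Pstar_def PID_def using pe
    by (smt (verit) max.cobounded2)
  have RS01: "\<And>x. x > 0 \<Longrightarrow> 0 \<le> RS x \<and> RS x \<le> 1"
  proof -
    fix x :: real assume x: "x > 0"
    have p0: "PID sigma2 mu x \<ge> 0" unfolding PID_def by simp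
    show "0 \<le> RS x \<and> RS x \<le> 1" unfolding RS_def rhostar_def Pstar_def using pe[OF x] p0
      by (auto simp: divide_le_eq)
  qed
  have ExpP: "Exp M h U (\<lambda>\<nu>. PS (fst \<nu>)) = (\<integral>\<omega>. PS (h \<omega>) \<partial>M)"
    unfolding Exp_def by simp
  have EPS: "(\<integral>\<omega>. PS (h \<omega>) \<partial>M) = Pavg" using assms(19) ExpP unfolding PS_def by simp
  have intPS: "integrable M (\<lambda>\<omega>. PS (h \<omega>))"
    using EPS assms(13) not_integrable_integral_eq by fastforce
  define QS where "QS \<omega> = QNL a b Ps T (h \<omega>) (PS (h \<omega>)) (RS (h \<omega>))" for \<omega>
  have EQS: "(\<integral>\<omega>. QS \<omega> \<partial>M) = Q" using assms(18) unfolding QS_def PS_def RS_def Exp_def by simp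
  have Qbd: "\<And>h p r. \<bar>QNL a b Ps T h p r\<bar> \<le> Ps * T / (1 - Omega a b)"
    using QNL_bound[OF a b Ps T] by blast
  have Cabs: "\<bar>Ps * T / (1 - Omega a b)\<bar> = Ps * T / (1 - Omega a b)"
    using Omega_bounds[OF a b] Ps T by simp
  have intQS: "integrable M QS"
  proof (rule Bochner_Integration.integrable_bound[where f = "\<lambda>_. Ps * T / (1 - Omega a b)"])
    show "integrable M (\<lambda>_. Ps * T / (1 - Omega a b))" by simp
    show "QS \<in> borel_measurable M" unfolding QS_def QNL_def Psi_def using mPSh mRSh hm by measurable
    show "AE x in M. norm (QS x) \<le> norm (Ps * T / (1 - Omega a b))"
      by (rule AE_I2) (simp only: real_norm_def Cabs QS_def Qbd)
  qed
  define RR where "RR \<omega> = rate sigma2 (h \<omega>) (PS (h \<omega>)) (RS (h \<omega>))" for \<omega>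
  have RRe: "RR \<omega> = ln (1 + h \<omega> * PID sigma2 mu (h \<omega>) / sigma2)" if "\<omega> \<in> space M" for \<omega>
  proof -
    have "(1 - RS (h \<omega>)) * PS (h \<omega>) = PID sigma2 mu (h \<omega>)"
      unfolding RS_def PS_def using cand_split(1)[OF pe[OF hpos[OF that]]] by simp
    then show ?thesis unfolding RR_def rate_def by (simp add: mult_ac)
  qed
  have intRR: "integrable M RR"
  proof (rule Bochner_Integration.integrable_bound[where f = "\<lambda>\<omega>. h \<omega> / sigma2 + PS (h \<omega>)"])
    show "integrable M (\<lambda>\<omega>. h \<omega> / sigma2 + PS (h \<omega>))"
      using intPS assms(6) by auto
    show "RR \<in> borel_measurable M" unfolding RR_def rate_def using mPSh mRSh hm by measurable
    show "AE x in M. norm (RR x) \<le> norm (h x / sigma2 + PS (h x))"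
    proof (rule AE_I2)
      fix x assume x: "x \<in> space M"
      have p0: "PID sigma2 mu (h x) \<ge> 0" unfolding PID_def by simp
      have pl: "PID sigma2 mu (h x) \<le> PS (h x)" unfolding PS_def Pstar_def using pe[OF hpos[OF x]] by simp
      have r: "0 \<le> RR x" "RR x \<le> h x / sigma2 + PS (h x)"
        using rate_bound[OF s hpos[OF x] p0] pl unfolding RRe[OF x] by auto
      have "0 \<le> h x / sigma2 + PS (h x)" using r by linarith
      then show "norm (RR x) \<le> norm (h x / sigma2 + PS (h x))" using r by simp
    qed
  qed
  have feas: "feasible_P2 M h U a b Ps T Pavg Q (\<lambda>\<nu>. PS (fst \<nu>)) (\<lambda>\<nu>. RS (fst \<nu>))"
    unfolding feasible_P2_def
  proof (intro conjI ballI)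
    show "(\<lambda>\<nu>::real\<times>real. PS (fst \<nu>)) \<in> borel_measurable borel" unfolding PS_def by (rule meas_fst)
    show "(\<lambda>\<nu>::real\<times>real. RS (fst \<nu>)) \<in> borel_measurable borel" unfolding RS_def by (rule meas_fst2)
    fix \<omega> assume w: "\<omega> \<in> space M"
    show "0 \<le> PS (fst (h \<omega>, U \<omega>))" using PS0 hpos[OF w] by simp
    show "0 \<le> RS (fst (h \<omega>, U \<omega>))" using RS01 hpos[OF w] by simp
    show "RS (fst (h \<omega>, U \<omega>)) \<le> 1" using RS01 hpos[OF w] by simp
  next
    show "integrable M (\<lambda>\<omega>. PS (fst (h \<omega>, U \<omega>)))" using intPS by simp
    show "Exp M h U (\<lambda>\<nu>. PS (fst \<nu>)) \<le> Pavg" using ExpP EPS by simp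
    show "Q \<le> Exp M h U (\<lambda>\<nu>. QNL a b Ps T (fst \<nu>) (PS (fst \<nu>)) (RS (fst \<nu>)))"
      using EQS unfolding QS_def Exp_def by simp
  qed
  have opt: "Exp M h U (\<lambda>\<nu>. rate sigma2 (fst \<nu>) (P \<nu>) (\<rho> \<nu>))
            \<le> Exp M h U (\<lambda>\<nu>. rate sigma2 (fst \<nu>) (PS (fst \<nu>)) (RS (fst \<nu>)))"
    if fP: "feasible_P2 M h U a b Ps T Pavg Q P \<rho>" for P \<rho>
  proof -
    define R where "R \<omega> = rate sigma2 (h \<omega>) (P (h \<omega>, U \<omega>)) (\<rho> (h \<omega>, U \<omega>))" for \<omega>
    define PP where "PP \<omega> = P (h \<omega>, U \<omega>)" for \<omega>
    define QQ where "QQ \<omega> = QNL a b Ps T (h \<omega>) (P (h \<omega>, U \<omega>)) (\<rho> (h \<omega>, U \<omega>))" for \<omega>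
    have e1: "Exp M h U (\<lambda>\<nu>. rate sigma2 (fst \<nu>) (P \<nu>) (\<rho> \<nu>)) = (\<integral>\<omega>. R \<omega> \<partial>M)"
      unfolding Exp_def R_def by simp
    have e2: "Exp M h U (\<lambda>\<nu>. rate sigma2 (fst \<nu>) (PS (fst \<nu>)) (RS (fst \<nu>))) = (\<integral>\<omega>. RR \<omega> \<partial>M)"
      unfolding Exp_def RR_def by simp
    have mP: "P \<in> borel_measurable borel" and mr: "\<rho> \<in> borel_measurable borel"
      and pw: "\<forall>\<omega>\<in>space M. 0 \<le> PP \<omega> \<and> 0 \<le> \<rho> (h \<omega>, U \<omega>) \<and> \<rho> (h \<omega>, U \<omega>) \<le> 1"
      and intPP: "integrable M PP"
      and EPP: "(\<integral>\<omega>. PP \<omega> \<partial>M) \<le> Pavg"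
      and EQQ: "(\<integral>\<omega>. QQ \<omega> \<partial>M) \<ge> Q"
      using fP unfolding feasible_P2_def Exp_def PP_def QQ_def by auto
    have mPP: "PP \<in> borel_measurable M" unfolding PP_def
      by (rule measurable_compose[OF hU mP])
    have mrr: "(\<lambda>\<omega>. \<rho> (h \<omega>, U \<omega>)) \<in> borel_measurable M"
      by (rule measurable_compose[OF hU mr])
    have intQQ: "integrable M QQ"
    proof (rule Bochner_Integration.integrable_bound[where f = "\<lambda>_. Ps * T / (1 - Omega a b)"])
      show "integrable M (\<lambda>_. Ps * T / (1 - Omega a b))" by simp
      show "QQ \<in> borel_measurable M" unfolding QQ_def QNL_def Psi_def
        using mPP[unfolded PP_def] mrr hm by measurable
      show "AE x in M. norm (QQ x) \<le> norm (Ps * T / (1 - Omega a b))"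
        by (rule AE_I2) (simp only: real_norm_def Cabs QQ_def Qbd)
    qed
    show ?thesis
    proof (cases "integrable M R")
      case False
      have "0 \<le> (\<integral>\<omega>. RR \<omega> \<partial>M)"
      proof (rule integral_nonneg_AE, rule AE_I2)
        fix x assume x: "x \<in> space M"
        have p0: "PID sigma2 mu (h x) \<ge> 0" unfolding PID_def by simp
        show "0 \<le> RR x" using rate_bound(1)[OF s hpos[OF x] p0] RRe[OF x] by simp
      qed
      then show ?thesis unfolding e1 e2 using not_integrable_integral_eq[OF False] by simp
    next
      case True
      have pt: "R \<omega> - mu * PP \<omega> + lam * QQ \<omega> \<le> RR \<omega> - mu * PS (h \<omega>) + lam * QS \<omega>"
        if w: "\<omega> \<in> space M" for \<omega>
        unfolding R_def PP_def QQ_def RR_def QS_def PS_def RS_def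
        using L_main[OF a b hpos[OF w] lam Ps T mu s] pw w unfolding PP_def by blast
      have "(\<integral>\<omega>. R \<omega> - mu * PP \<omega> + lam * QQ \<omega> \<partial>M) \<le> (\<integral>\<omega>. RR \<omega> - mu * PS (h \<omega>) + lam * QS \<omega> \<partial>M)"
        by (rule integral_mono) (use True intPP intQQ intRR intPS intQS pt in auto)
      moreover have "(\<integral>\<omega>. R \<omega> - mu * PP \<omega> + lam * QQ \<omega> \<partial>M) =
          (\<integral>\<omega>. R \<omega> \<partial>M) - mu * (\<integral>\<omega>. PP \<omega> \<partial>M) + lam * (\<integral>\<omega>. QQ \<omega> \<partial>M)"
        using True intPP intQQ by simp
      moreover have "(\<integral>\<omega>. RR \<omega> - mu * PS (h \<omega>) + lam * QS \<omega> \<partial>M) =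
          (\<integral>\<omega>. RR \<omega> \<partial>M) - mu * (\<integral>\<omega>. PS (h \<omega>) \<partial>M) + lam * (\<integral>\<omega>. QS \<omega> \<partial>M)"
        using intRR intPS intQS by simp
      moreover have "mu * (\<integral>\<omega>. PP \<omega> \<partial>M) \<le> mu * Pavg" using EPP mu by simp
      moreover have "lam * Q \<le> lam * (\<integral>\<omega>. QQ \<omega> \<partial>M)" using EQQ lam by simp
      moreover have "mu * (\<integral>\<omega>. PS (h \<omega>) \<partial>M) = mu * Pavg" using EPS by simp
      moreover have "lam * (\<integral>\<omega>. QS \<omega> \<partial>M) = lam * Q" using EQS by simp
      ultimately show ?thesis unfolding e1 e2 by linarith
    qed
  qed
  show ?thesis using feas opt unfolding PS_def RS_def by blast
qed

end
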